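(* Consider the setting described in the context, assume A1–A5, and let $s=\frac{r}{2-4r}$. For any constants $c>0$ and $C>0$ there is $\gamma>0$ such that, whenever $f_n=\sum_{j=1}^{ck_n}\theta_{nj}\phi_j$ and $\|f_n\|\le Cn^{-r}$, one has $f_n\in\bar{\mathbb{B}}^s_{2\infty}(\gamma)$.
   Context: Fix $\sigma>0$, $0<r<1/2$ and an orthonormal basis $(\phi_j)_{j\ge1}$ of $\mathbb{L}_2(0,1)$. For each $n$ nonnegative weights $\kappa_{nj}^2$ are given with $\rho_n=\sum_j\kappa_{nj}^2<\infty$; $k_n=\sup\{k:\sum_{j<k}\kappa_{nj}^2\le\rho_n/2\}$ and $\kappa_n^2=\kappa_{nk_n}^2$. Assumptions: (A1) $j\mapsto\kappa_{nj}^2$ decreasing; (A2) $C_1<\sigma^{-4}n^2\sum_j\kappa_{nj}^4<C_2$ for all $n$; (A3) $c_1n^{-2r}\le\rho_n\le c_2n^{-2r}$; (A4) $\exists C_1>0,\lambda>1$: $\kappa^2_{n,[(1+\delta)k_n]}<C_1(1+\delta)^{-\lambda}\kappa_n^2$ for all $\delta>0,n$; (A5) $\kappa_{n1}^2\asymp\kappa_n^2$ and for each $c>1$ there is $C>0$ with $\kappa^2_{n,[ck_n]}\ge C\kappa_n^2$. $\bar{\mathbb{B}}^s_{2\infty}(P_0)=\{f=\sum_j\theta_j\phi_j:\ \sup_{\lambda>0}\lambda^{2s}\sum_{j>\lambda}\theta_j^2\le P_0\}$. *)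

theory Defs
  imports "HOL-Analysis.Analysis"
begin

text \<open>Weights: kap n j stands for the squared weight kappa_{nj}^2, indices j >= 1
  (the value at j = 0 is irrelevant).  Functions f = sum_j theta_j phi_j are identified
  with their coefficient sequences theta (j >= 1) w.r.t. the fixed orthonormal basis.\<close>

definition rho :: "(nat \<Rightarrow> nat \<Rightarrow> real) \<Rightarrow> nat \<Rightarrow> real" where
  "rho kap n = (\<Sum>j. kap n (Suc j))"

definition kn :: "(nat \<Rightarrow> nat \<Rightarrow> real) \<Rightarrow> nat \<Rightarrow> nat" where
  "kn kap n = Sup {k. (\<Sum>j\<in>{1..<k}. kap n j) \<le> rho kap n / 2}"

definition kappa_n2 :: "(nat \<Rightarrow> nat \<Rightarrow> real) \<Rightarrow> nat \<Rightarrow> real" where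
  "kappa_n2 kap n = kap n (kn kap n)"

definition coef_norm :: "(nat \<Rightarrow> real) \<Rightarrow> real" where
  "coef_norm \<theta> = sqrt (\<Sum>j. (\<theta> (Suc j))\<^sup>2)"

definition besov_ball :: "real \<Rightarrow> real \<Rightarrow> (nat \<Rightarrow> real) \<Rightarrow> bool" where
  "besov_ball s P0 \<theta> \<longleftrightarrow> summable (\<lambda>j. (\<theta> (Suc j))\<^sup>2) \<and>
     (\<forall>t>0. t powr (2 * s) * (\<Sum>j. if real j > t then (\<theta> j)\<^sup>2 else 0) \<le> P0)"

end

theory Submission
  imports Defs
begin

lemma kn_mem:
  fixes kap :: "nat \<Rightarrow> nat \<Rightarrow> real"
  assumes pos: "rho kap n > 0"
    and nonneg: "\<And>j. 1 \<le> j \<Longrightarrow> 0 \<le> kap n j"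
    and summ: "summable (\<lambda>j. kap n (Suc j))"
  shows "(\<Sum>j\<in>{1..<kn kap n}. kap n j) \<le> rho kap n / 2"
proof -
  define S where "S = {k. (\<Sum>j\<in>{1..<k}. kap n j) \<le> rho kap n / 2}"
  have "(\<lambda>m. \<Sum>j<m. kap n (Suc j)) \<longlonglongrightarrow> rho kap n"
    using summ unfolding rho_def by (simp add: summable_LIMSEQ)
  moreover have "rho kap n / 2 < rho kap n" using pos by simp
  ultimately have "\<forall>\<^sub>F m in sequentially. rho kap n / 2 < (\<Sum>j<m. kap n (Suc j))"
    using order_tendstoD(1) by blast
  then obtain M where M: "rho kap n / 2 < (\<Sum>j<M. kap n (Suc j))"
    by (meson eventually_sequentially order.refl)
  have shift: "(\<Sum>j\<in>{1..<k}. kap n j) = (\<Sum>j<k-1. kap n (Suc j))" for k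
  proof -
    have "(\<Sum>j\<in>{1..<k}. kap n j) = (\<Sum>j\<in>{0..<k-1}. kap n (Suc j))"
    proof (cases k)
      case (Suc m)
      have "(\<Sum>j\<in>{Suc 0..<Suc m}. kap n j) = (\<Sum>j\<in>{0..<m}. kap n (Suc j))"
        by (rule sum.shift_bounds_Suc_ivl)
      then show ?thesis using Suc by simp
    qed simp
    then show ?thesis by (simp add: atLeast0LessThan)
  qed
  have "S \<subseteq> {..M}"
  proof
    fix k assume "k \<in> S"
    show "k \<in> {..M}"
    proof (rule ccontr)
      assume "k \<notin> {..M}"
      then have "M \<le> k - 1" by auto
      then have "(\<Sum>j<M. kap n (Suc j)) \<le> (\<Sum>j<k-1. kap n (Suc j))"
        by (intro sum_mono2) (auto intro: nonneg)
      with M shift[of k] \<open>k \<in> S\<close> show False unfolding S_def by auto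
    qed
  qed
  then have fin: "finite S" by (rule finite_subset) simp
  have "0 \<in> S" unfolding S_def using pos by simp
  then have "S \<noteq> {}" by auto
  then have "Sup S \<in> S" using fin by (simp add: cSup_eq_Max)
  then show ?thesis unfolding S_def kn_def by simp
qed

lemma kap_mono:
  fixes kap :: "nat \<Rightarrow> nat \<Rightarrow> real"
  assumes A1: "\<And>j. 1 \<le> j \<Longrightarrow> kap n (Suc j) \<le> kap n j"
  shows "1 \<le> i \<Longrightarrow> i \<le> k \<Longrightarrow> kap n k \<le> kap n i"
proof (induction k)
  case 0 then show ?case by simp
next
  case (Suc k)
  show ?case
  proof (cases "i = Suc k")
    case False
    then have "kap n k \<le> kap n i" using Suc by auto
    moreover have "kap n (Suc k) \<le> kap n k" using A1 Suc False by (metis le_Suc_eq le_trans)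
    ultimately show ?thesis by linarith
  qed simp
qed


lemma kn_upper:
  fixes kap :: "nat \<Rightarrow> nat \<Rightarrow> real" and \<sigma> r C1 b c2 :: real
  assumes n: "1 \<le> n" and sigma: "\<sigma> > 0" and r: "0 < r" "r < 1/2"
    and nonneg: "\<And>j. 1 \<le> j \<Longrightarrow> 0 \<le> kap n j"
    and summ: "summable (\<lambda>j. kap n (Suc j))"
    and A1: "\<And>j. 1 \<le> j \<Longrightarrow> kap n (Suc j) \<le> kap n j"
    and C1: "C1 > 0" "C1 < \<sigma> powr (-4) * (real n)\<^sup>2 * (\<Sum>j. (kap n (Suc j))\<^sup>2)"
    and b: "b > 0" "kap n 1 \<le> b * kappa_n2 kap n"
    and c2: "c2 > 0" "rho kap n \<le> c2 * real n powr (-2*r)"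
    and rpos: "rho kap n > 0"
  shows "real (kn kap n) \<le> max 1 (b * c2\<^sup>2 / (C1 * \<sigma> powr 4)) * real n powr (2 - 4*r)"
proof -
  define K where "K = kn kap n"
  define D where "D = max 1 (b * c2\<^sup>2 / (C1 * \<sigma> powr 4))"
  define \<rho> where "\<rho> = rho kap n"
  define S4 where "S4 = (\<Sum>j. (kap n (Suc j))\<^sup>2)"
  define \<kappa> where "\<kappa> = kappa_n2 kap n"
  have npos: "real n > 0" using n by simp
  have n1: "1 \<le> real n powr (2 - 4*r)" using n r by (simp add: ge_one_powr_ge_zero)
  have D1: "D \<ge> 1" unfolding D_def by simp
  show ?thesis
  proof (cases "K \<le> 1")
    case True
    then have "real K \<le> 1" by simp
    also have "1 \<le> D * real n powr (2 - 4*r)" using D1 n1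
      by (metis mult_mono' dual_order.trans mult_1_left zero_le_one)
    finally show ?thesis unfolding K_def D_def .
  next
    case False
    then have K2: "K \<ge> 2" by simp
    have mem: "(\<Sum>j\<in>{1..<K}. kap n j) \<le> \<rho> / 2"
      unfolding K_def \<rho>_def using kn_mem[OF rpos nonneg summ] by simp
    have "real (card {1..<K}) * \<kappa> \<le> (\<Sum>j\<in>{1..<K}. kap n j)"
      by (rule sum_bounded_below) (auto simp: \<kappa>_def kappa_n2_def K_def intro: kap_mono[of kap n, OF A1])
    with mem have h1: "real (K - 1) * \<kappa> \<le> \<rho> / 2" by simp
    have kpos: "\<kappa> \<ge> 0" unfolding \<kappa>_def kappa_n2_def using nonneg K2 K_def by simp
    have "real K \<le> 2 * real (K - 1)" using K2 by (simp add: of_nat_diff)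
    then have "real K * \<kappa> \<le> (2 * real (K - 1)) * \<kappa>"
      using kpos by (intro mult_right_mono) auto
    then have "real K * \<kappa> \<le> 2 * (real (K - 1) * \<kappa>)" by simp
    with h1 have h2: "real K * \<kappa> \<le> \<rho>" by simp
    have t: "(kap n (Suc j))\<^sup>2 \<le> kap n 1 * kap n (Suc j)" for j
    proof -
      have "kap n (Suc j) \<le> kap n 1" by (rule kap_mono[of kap n, OF A1]) auto
      moreover have "0 \<le> kap n (Suc j)" using nonneg by simp
      ultimately show ?thesis by (simp add: power2_eq_square mult_right_mono)
    qed
    have sm2: "summable (\<lambda>j. kap n 1 * kap n (Suc j))" using summ by (rule summable_mult)
    have sm1: "summable (\<lambda>j. (kap n (Suc j))\<^sup>2)"
      by (rule summable_comparison_test[OF _ sm2]) (use t in auto)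
    have "S4 \<le> (\<Sum>j. kap n 1 * kap n (Suc j))" unfolding S4_def
      by (rule suminf_le[OF _ sm1 sm2]) (use t in auto)
    also have "\<dots> = kap n 1 * \<rho>" unfolding \<rho>_def rho_def using summ by (rule suminf_mult)
    also have "\<dots> \<le> b * \<kappa> * \<rho>" using b rpos \<rho>_def \<kappa>_def by (intro mult_right_mono) auto
    finally have h4: "S4 \<le> b * \<kappa> * \<rho>" .
    have "real K * S4 \<le> real K * (b * \<kappa> * \<rho>)" using h4 by (intro mult_left_mono) auto
    also have "\<dots> = b * \<rho> * (real K * \<kappa>)" by simp
    also have "\<dots> \<le> b * \<rho> * \<rho>" using h2 b rpos \<rho>_def by (intro mult_left_mono) auto
    finally have h5: "real K * S4 \<le> b * \<rho>\<^sup>2" by (simp add: power2_eq_square)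
    have rr: "\<rho>\<^sup>2 \<le> c2\<^sup>2 * real n powr (-4*r)"
    proof -
      have "\<rho>\<^sup>2 \<le> (c2 * real n powr (-2*r))\<^sup>2"
        using c2 rpos \<rho>_def by (intro power_mono) auto
      also have "\<dots> = c2\<^sup>2 * real n powr (-4*r)"
        using npos by (simp add: power_mult_distrib powr_realpow[symmetric] powr_powr)
      finally show ?thesis .
    qed
    have sig: "\<sigma> powr (-4) = 1 / \<sigma> powr 4" using sigma by (simp add: powr_minus divide_inverse)
    have s4: "C1 * \<sigma> powr 4 < (real n)\<^sup>2 * S4"
    proof -
      have sp: "\<sigma> powr 4 > 0" using sigma by simp
      have "C1 < (real n)\<^sup>2 * S4 / \<sigma> powr 4" using C1(2) unfolding S4_def sig by simp
      then show ?thesis using sp by (simp add: pos_less_divide_eq mult.commute)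
    qed
    have "real K * (C1 * \<sigma> powr 4) \<le> real K * ((real n)\<^sup>2 * S4)"
      using s4 by (intro mult_left_mono) auto
    also have "\<dots> = (real n)\<^sup>2 * (real K * S4)" by simp
    also have "\<dots> \<le> (real n)\<^sup>2 * (b * c2\<^sup>2 * real n powr (-4*r))"
    proof -
      have "b * \<rho>\<^sup>2 \<le> b * (c2\<^sup>2 * real n powr (-4*r))"
        using rr b by (intro mult_left_mono) auto
      then have "real K * S4 \<le> b * c2\<^sup>2 * real n powr (-4*r)" using h5
        by (metis mult.assoc order_trans)
      then show ?thesis by (intro mult_left_mono) auto
    qed
    also have "\<dots> = b * c2\<^sup>2 * real n powr (2 - 4*r)"
    proof -
      have "(real n)\<^sup>2 * real n powr (-4*r) = real n powr 2 * real n powr (-4*r)"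
        using npos by (simp add: powr_realpow)
      also have "\<dots> = real n powr (2 + (-4*r))" by (rule powr_add[symmetric])
      also have "2 + (-4*r) = 2 - 4*r" by simp
      finally show ?thesis by (metis mult.commute mult.left_commute)
    qed
    finally have "real K * (C1 * \<sigma> powr 4) \<le> b * c2\<^sup>2 * real n powr (2 - 4*r)" .
    then have "real K \<le> b * c2\<^sup>2 / (C1 * \<sigma> powr 4) * real n powr (2 - 4*r)"
      using C1 sigma by (simp add: field_simps)
    also have "\<dots> \<le> D * real n powr (2 - 4*r)"
      unfolding D_def by (intro mult_right_mono) auto
    finally show ?thesis unfolding K_def D_def .
  qed
qed

theorem lemma3:
  fixes \<sigma> r :: real and kap :: "nat \<Rightarrow> nat \<Rightarrow> real"
  assumes sigma: "\<sigma> > 0" and r: "0 < r" "r < 1/2"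
    and nonneg: "\<And>n j. 1 \<le> n \<Longrightarrow> 1 \<le> j \<Longrightarrow> 0 \<le> kap n j"
    and summ: "\<And>n. 1 \<le> n \<Longrightarrow> summable (\<lambda>j. kap n (Suc j))"
    and A1: "\<And>n j. 1 \<le> n \<Longrightarrow> 1 \<le> j \<Longrightarrow> kap n (Suc j) \<le> kap n j"
    and A2: "\<exists>C1 C2. 0 < C1 \<and> (\<forall>n\<ge>1. C1 < \<sigma> powr (-4) * (real n)\<^sup>2 * (\<Sum>j. (kap n (Suc j))\<^sup>2)
                 \<and> \<sigma> powr (-4) * (real n)\<^sup>2 * (\<Sum>j. (kap n (Suc j))\<^sup>2) < C2)"
    and A3: "\<exists>c1 c2. 0 < c1 \<and> 0 < c2 \<and> (\<forall>n\<ge>1. c1 * real n powr (-2*r) \<le> rho kap n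
                 \<and> rho kap n \<le> c2 * real n powr (-2*r))"
    and A4: "\<exists>C1 lam. C1 > 0 \<and> lam > 1 \<and> (\<forall>\<delta>>0. \<forall>n\<ge>1.
                 kap n (nat \<lfloor>(1 + \<delta>) * real (kn kap n)\<rfloor>) < C1 * (1 + \<delta>) powr (-lam) * kappa_n2 kap n)"
    and A5a: "\<exists>a b. 0 < a \<and> 0 < b \<and> (\<forall>n\<ge>1. a * kappa_n2 kap n \<le> kap n 1 \<and> kap n 1 \<le> b * kappa_n2 kap n)"
    and A5b: "\<And>c. c > 1 \<Longrightarrow> \<exists>C>0. \<forall>n\<ge>1. kap n (nat \<lfloor>c * real (kn kap n)\<rfloor>) \<ge> C * kappa_n2 kap n"
  shows "\<forall>c>0. \<forall>C>0. \<exists>\<gamma>>0. \<forall>n\<ge>1. \<forall>\<theta> :: nat \<Rightarrow> real.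
           (\<forall>j. real j > c * real (kn kap n) \<longrightarrow> \<theta> j = 0) \<and>
           coef_norm \<theta> \<le> C * real n powr (-r)
           \<longrightarrow> besov_ball (r / (2 - 4*r)) \<gamma> \<theta>"
proof (intro allI impI)
  fix c C :: real
  assume c: "c > 0" and C: "C > 0"
  obtain C1 C2 where C1: "0 < C1" "\<forall>n\<ge>1. C1 < \<sigma> powr (-4) * (real n)\<^sup>2 * (\<Sum>j. (kap n (Suc j))\<^sup>2)"
    using A2 by blast
  obtain c1 c2 where c12: "0 < c1" "0 < c2" "\<forall>n\<ge>1. c1 * real n powr (-2*r) \<le> rho kap n
                 \<and> rho kap n \<le> c2 * real n powr (-2*r)" using A3 by blast
  obtain a b where ab: "0 < a" "0 < b" "\<forall>n\<ge>1. a * kappa_n2 kap n \<le> kap n 1 \<and> kap n 1 \<le> b * kappa_n2 kap n"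
    using A5a by blast
  define D where "D = max 1 (b * c2\<^sup>2 / (C1 * \<sigma> powr 4))"
  define ss where "ss = r / (2 - 4*r)"
  have s0: "ss > 0" unfolding ss_def using r by simp
  have s2: "(2 - 4*r) * (2* ss) = 2*r" unfolding ss_def using r by (simp add: field_simps)
  have D1: "D \<ge> 1" unfolding D_def by simp
  define \<gamma> where "\<gamma> = c powr (2* ss) * D powr (2* ss) * C\<^sup>2"
  have gpos: "\<gamma> > 0" unfolding \<gamma>_def using c C D1 by simp
  show "\<exists>\<gamma>>0. \<forall>n\<ge>1. \<forall>\<theta> :: nat \<Rightarrow> real.
           (\<forall>j. real j > c * real (kn kap n) \<longrightarrow> \<theta> j = 0) \<and>
           coef_norm \<theta> \<le> C * real n powr (-r)
           \<longrightarrow> besov_ball (r / (2 - 4*r)) \<gamma> \<theta>"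
  proof (intro exI[of _ \<gamma>] conjI gpos allI impI)
    fix n :: nat and \<theta> :: "nat \<Rightarrow> real"
    assume n: "1 \<le> n"
    assume H: "(\<forall>j. real j > c * real (kn kap n) \<longrightarrow> \<theta> j = 0) \<and>
           coef_norm \<theta> \<le> C * real n powr (-r)"
    define K where "K = kn kap n"
    have supp: "\<And>j. real j > c * real K \<Longrightarrow> \<theta> j = 0" using H K_def by auto
    have npos: "real n > 0" using n by simp
    have rpos: "rho kap n > 0"
    proof -
      have "c1 * real n powr (-2*r) > 0" using c12(1) npos by simp
      moreover have "c1 * real n powr (-2*r) \<le> rho kap n" using c12(3) n by blast
      ultimately show ?thesis by linarith
    qed
    have KD: "real K \<le> D * real n powr (2 - 4*r)"
      unfolding K_def D_def
      by (rule kn_upper[OF n sigma r nonneg summ A1 C1(1) _ ab(2) _ c12(2) _ rpos])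
         (use n C1(2) ab(3) c12(3) in blast)+
    define N where "N = {..nat \<lceil>c * real K\<rceil>}"
    have outN: "real j > c * real K" if "j \<notin> N" for j
    proof -
      have "j > nat \<lceil>c * real K\<rceil>" using that unfolding N_def by simp
      then have "real j > real (nat \<lceil>c * real K\<rceil>)" by simp
      moreover have "real (nat \<lceil>c * real K\<rceil>) \<ge> c * real K"
        by (rule real_nat_ceiling_ge)
      ultimately show ?thesis by linarith
    qed
    have finN: "finite N" unfolding N_def by simp
    have sm: "summable (\<lambda>j. (\<theta> (Suc j))\<^sup>2)"
    proof (rule summable_finite[OF finN])
      fix j assume "j \<notin> N"
      then have "real (Suc j) > c * real K" using outN by fastforce
      then show "(\<theta> (Suc j))\<^sup>2 = 0" using supp by simp
    qed
    have normsq: "(\<Sum>j. (\<theta> (Suc j))\<^sup>2) \<le> C\<^sup>2 * real n powr (-2*r)"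
    proof -
      have nn: "0 \<le> (\<Sum>j. (\<theta> (Suc j))\<^sup>2)" using sm by (intro suminf_nonneg) auto
      have cn: "sqrt (\<Sum>j. (\<theta> (Suc j))\<^sup>2) \<le> C * real n powr (-r)"
        using H unfolding coef_norm_def by simp
      have "(\<Sum>j. (\<theta> (Suc j))\<^sup>2) = (sqrt (\<Sum>j. (\<theta> (Suc j))\<^sup>2))\<^sup>2" using nn by simp
      also have "\<dots> \<le> (C * real n powr (-r))\<^sup>2" using cn nn by (intro power_mono) auto
      also have "\<dots> = C\<^sup>2 * real n powr (-2*r)"
      proof -
        have "(real n powr (-r))\<^sup>2 = real n powr (-r) * real n powr (-r)" by (simp add: power2_eq_square)
        also have "\<dots> = real n powr (-r + -r)" by (rule powr_add[symmetric])
        also have "-r + -r = -2*r" by simp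
        finally show ?thesis by (simp add: power_mult_distrib)
      qed
      finally show ?thesis .
    qed
    show "besov_ball (r / (2 - 4*r)) \<gamma> \<theta>"
      unfolding besov_ball_def ss_def[symmetric]
    proof (intro conjI sm allI impI)
      fix t :: real assume t: "t > 0"
      define g where "g = (\<lambda>j::nat. if real j > t then (\<theta> j)\<^sup>2 else 0)"
      have smg: "summable g"
      proof (rule summable_finite[OF finN])
        fix j assume "j \<notin> N"
        then show "g j = 0" using supp outN unfolding g_def by simp
      qed
      have g0: "g 0 = 0" using t unfolding g_def by simp
      have "suminf g = (\<Sum>j. g (Suc j))" using suminf_split_head[OF smg] g0 by simp
      also have "\<dots> \<le> (\<Sum>j. (\<theta> (Suc j))\<^sup>2)"
      proof (rule suminf_le)
        show "summable (\<lambda>j. g (Suc j))" using smg by (simp add: summable_Suc_iff)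
      qed (use sm in \<open>auto simp: g_def\<close>)
      finally have Tle: "suminf g \<le> C\<^sup>2 * real n powr (-2*r)" using normsq by linarith
      have Tnn: "suminf g \<ge> 0" using smg by (intro suminf_nonneg) (auto simp: g_def)
      show "t powr (2 * ss) * suminf g \<le> \<gamma>"
      proof (cases "t \<ge> c * real K")
        case True
        have "g = (\<lambda>_. 0)"
        proof
          fix j show "g j = 0" using supp True unfolding g_def by auto
        qed
        then show ?thesis using gpos by simp
      next
        case False
        have "t powr (2* ss) \<le> (c * real K) powr (2* ss)"
          using False t s0 by (intro powr_mono2) auto
        also have "\<dots> = c powr (2* ss) * real K powr (2* ss)" using c by (simp add: powr_mult)
        also have "\<dots> \<le> c powr (2* ss) * (D * real n powr (2 - 4*r)) powr (2* ss)"
          using KD s0 by (intro mult_left_mono powr_mono2) auto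
        also have "\<dots> = c powr (2* ss) * D powr (2* ss) * real n powr (2*r)"
        proof -
          have "(D * real n powr (2 - 4*r)) powr (2* ss) = D powr (2* ss) * (real n powr (2 - 4*r)) powr (2* ss)"
            by (rule powr_mult)
          also have "(real n powr (2 - 4*r)) powr (2* ss) = real n powr ((2 - 4*r) * (2* ss))"
            by (rule powr_powr)
          also have "(2 - 4*r) * (2* ss) = 2*r" by (rule s2)
          finally show ?thesis by (simp only: mult.assoc)
        qed
        finally have tb: "t powr (2* ss) \<le> c powr (2* ss) * D powr (2* ss) * real n powr (2*r)" .
        have "t powr (2 * ss) * suminf g \<le>
              (c powr (2* ss) * D powr (2* ss) * real n powr (2*r)) * (C\<^sup>2 * real n powr (-2*r))"
          using tb Tle Tnn by (intro mult_mono) auto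
        also have "\<dots> = \<gamma> * (real n powr (2*r) * real n powr (-2*r))"
          unfolding \<gamma>_def by (simp only: mult_ac)
        also have "\<dots> = \<gamma>"
        proof -
          have "real n powr (2*r) * real n powr (-2*r) = real n powr (2*r + -2*r)"
            by (rule powr_add[symmetric])
          also have "\<dots> = 1" using npos by simp
          finally show ?thesis by simp
        qed
        finally show ?thesis .
      qed
    qed
  qed
qed

end
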